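(* If $(X,\Pi)$ is a finite quasiconcave quasisubmodular aggregative game for which a fESS exists, then imitation is not subject to a money pump.
   Context: An aggregative game $(X,\Pi)$ consists of: a totally ordered action set $X$ and a totally ordered set $Z$; a symmetric aggregator $a:X\times X\to Z$ ($a(x,y)=a(y,x)$) that is monotone increasing (if $x''\ge x'$, $y''\ge y'$ and $(x'',y'')\neq(x',y')$ then $a(x'',y'')>a(x',y')$); and $\Pi:X\times Z\to\mathbb{R}$; the underlying symmetric two-player game has payoff $\pi(x,y)=\Pi(x,a(x,y))$. Finite means $X$ finite. Quasisubmodular: for all $z''>z'$ and $x''>x'$, $\Pi(x'',z'')-\Pi(x',z'')\ge0\Rightarrow\Pi(x'',z')-\Pi(x',z')\ge0$ and the same with $>0$ in both places. Quasiconcave: for all $x<x'<x''$ and $z$, $\Pi(x',z)\ge\min\{\Pi(x,z),\Pi(x'',z)\}$. fESS: $x^*$ with $\Pi(x^*,a(x^*,x))\ge\Pi(x,a(x^*,x))$ for all $x\in X$. Relative payoff: $\Delta(x,y)=\pi(x,y)-\pi(y,x)$. Imitate-the-best: given initial $y_0\in X$ and any opponent sequence $(x_t)_{t\ge0}$, $y_t=x_{t-1}$ if $\Delta(x_{t-1},y_{t-1})>0$ and $y_t=y_{t-1}$ otherwise. Imitation is not subject to a money pump if there is $M\in\mathbb{R}_+$ such that for every $y_0\in X$ and every sequence $(x_t)$, $\limsup_{T\to\infty}\sum_{t=0}^T\Delta(x_t,y_t)\le M$. *)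

theory Defs
  imports Complex_Main "HOL-Library.Liminf_Limsup" "HOL-Library.Extended_Real"
begin

definition symmetric_aggregator :: "('x \<Rightarrow> 'x \<Rightarrow> 'z) \<Rightarrow> bool" where
  "symmetric_aggregator a \<longleftrightarrow> (\<forall>x y. a x y = a y x)"

definition monotone_aggregator :: "('x::linorder \<Rightarrow> 'x \<Rightarrow> 'z::linorder) \<Rightarrow> bool" where
  "monotone_aggregator a \<longleftrightarrow>
     (\<forall>x' x'' y' y''. x'' \<ge> x' \<and> y'' \<ge> y' \<and> (x'', y'') \<noteq> (x', y') \<longrightarrow> a x'' y'' > a x' y')"

definition aggregative_game :: "('x::linorder \<Rightarrow> 'x \<Rightarrow> 'z::linorder) \<Rightarrow> bool" where
  "aggregative_game a \<longleftrightarrow> symmetric_aggregator a \<and> monotone_aggregator a"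

definition payoff :: "('x \<Rightarrow> 'x \<Rightarrow> 'z) \<Rightarrow> ('x \<Rightarrow> 'z \<Rightarrow> real) \<Rightarrow> 'x \<Rightarrow> 'x \<Rightarrow> real" where
  "payoff a \<Pi> x y = \<Pi> x (a x y)"

definition quasisubmodular :: "('x::linorder \<Rightarrow> 'z::linorder \<Rightarrow> real) \<Rightarrow> bool" where
  "quasisubmodular \<Pi> \<longleftrightarrow>
     (\<forall>z' z'' x' x''. z'' > z' \<and> x'' > x' \<longrightarrow>
        (\<Pi> x'' z'' - \<Pi> x' z'' \<ge> 0 \<longrightarrow> \<Pi> x'' z' - \<Pi> x' z' \<ge> 0) \<and>
        (\<Pi> x'' z'' - \<Pi> x' z'' > 0 \<longrightarrow> \<Pi> x'' z' - \<Pi> x' z' > 0))"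

definition quasiconcave :: "('x::linorder \<Rightarrow> 'z \<Rightarrow> real) \<Rightarrow> bool" where
  "quasiconcave \<Pi> \<longleftrightarrow>
     (\<forall>x x' x'' z. x < x' \<and> x' < x'' \<longrightarrow> \<Pi> x' z \<ge> min (\<Pi> x z) (\<Pi> x'' z))"

definition fESS :: "('x \<Rightarrow> 'x \<Rightarrow> 'z) \<Rightarrow> ('x \<Rightarrow> 'z \<Rightarrow> real) \<Rightarrow> 'x \<Rightarrow> bool" where
  "fESS a \<Pi> xs \<longleftrightarrow> (\<forall>x. \<Pi> xs (a xs x) \<ge> \<Pi> x (a xs x))"

definition relpay :: "('x \<Rightarrow> 'x \<Rightarrow> 'z) \<Rightarrow> ('x \<Rightarrow> 'z \<Rightarrow> real) \<Rightarrow> 'x \<Rightarrow> 'x \<Rightarrow> real" where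
  "relpay a \<Pi> x y = payoff a \<Pi> x y - payoff a \<Pi> y x"

primrec imitate :: "('x \<Rightarrow> 'x \<Rightarrow> 'z) \<Rightarrow> ('x \<Rightarrow> 'z \<Rightarrow> real) \<Rightarrow> 'x \<Rightarrow> (nat \<Rightarrow> 'x) \<Rightarrow> nat \<Rightarrow> 'x" where
  "imitate a \<Pi> y0 xs 0 = y0"
| "imitate a \<Pi> y0 xs (Suc t) =
     (if relpay a \<Pi> (xs t) (imitate a \<Pi> y0 xs t) > 0 then xs t else imitate a \<Pi> y0 xs t)"

definition no_money_pump :: "('x \<Rightarrow> 'x \<Rightarrow> 'z) \<Rightarrow> ('x \<Rightarrow> 'z \<Rightarrow> real) \<Rightarrow> bool" where
  "no_money_pump a \<Pi> \<longleftrightarrow>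
     (\<exists>M::real. M \<ge> 0 \<and> (\<forall>y0 xs.
        limsup (\<lambda>T. ereal (\<Sum>t\<le>T. relpay a \<Pi> (xs t) (imitate a \<Pi> y0 xs t))) \<le> ereal M))"

end

theory Submission
  imports Defs
begin

locale G =
  fixes a :: "'x::{linorder,finite} \<Rightarrow> 'x \<Rightarrow> 'z::linorder"
    and \<Pi> :: "'x \<Rightarrow> 'z \<Rightarrow> real" and xs :: 'x
  assumes sym: "\<And>x y. a x y = a y x"
    and mono: "\<And>x' x'' y' y''. x'' \<ge> x' \<Longrightarrow> y'' \<ge> y' \<Longrightarrow> (x'',y'') \<noteq> (x',y') \<Longrightarrow> a x'' y'' > a x' y'"
    and qc: "\<And>x x' x'' z. x < x' \<Longrightarrow> x' < x'' \<Longrightarrow> \<Pi> x' z \<ge> min (\<Pi> x z) (\<Pi> x'' z)"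
    and qs1: "\<And>z' z'' x' x''. z' < z'' \<Longrightarrow> x' < x'' \<Longrightarrow> \<Pi> x'' z'' - \<Pi> x' z'' \<ge> 0 \<Longrightarrow> \<Pi> x'' z' - \<Pi> x' z' \<ge> 0"
    and qs2: "\<And>z' z'' x' x''. z' < z'' \<Longrightarrow> x' < x'' \<Longrightarrow> \<Pi> x'' z'' - \<Pi> x' z'' > 0 \<Longrightarrow> \<Pi> x'' z' - \<Pi> x' z' > 0"
    and fess: "\<And>x. \<Pi> xs (a xs x) \<ge> \<Pi> x (a xs x)"
begin

abbreviation D where "D x y \<equiv> relpay a \<Pi> x y"

lemma D_eq: "D x y = \<Pi> x (a x y) - \<Pi> y (a x y)"
  by (simp add: relpay_def payoff_def sym[of y x])

lemma D_anti: "D x y = - D y x"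
  by (simp add: relpay_def)

lemma D_self: "D x x = 0"
  by (simp add: relpay_def)

lemma L1: "\<not> D x xs > 0"
  using fess[of x] by (simp add: D_eq sym[of x xs])

lemma L2: assumes "x < y" "y < xs" shows "\<not> D x y > 0"
proof -
  define w where "w = a xs x"
  have f: "\<Pi> xs w \<ge> \<Pi> x w" using fess[of x] w_def by simp
  have "\<Pi> y w \<ge> min (\<Pi> x w) (\<Pi> xs w)" using qc[OF assms] .
  hence h: "\<Pi> y w - \<Pi> x w \<ge> 0" using f by linarith
  have zl: "a x y < w" unfolding w_def using mono[of x x y xs] assms sym[of xs x] by auto
  have "\<Pi> y (a x y) - \<Pi> x (a x y) \<ge> 0" using qs1[OF zl assms(1) h] .
  thus ?thesis by (simp add: D_eq)
qed

lemma L3: assumes "xs < y" "y < x" shows "\<not> D x y > 0"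
proof
  assume "D x y > 0"
  hence p: "\<Pi> x (a x y) - \<Pi> y (a x y) > 0" by (simp add: D_eq)
  define w where "w = a xs x"
  have f: "\<Pi> xs w \<ge> \<Pi> x w" using fess[of x] w_def by simp
  have "\<Pi> y w \<ge> min (\<Pi> xs w) (\<Pi> x w)" using qc[OF assms] .
  hence h: "\<Pi> x w - \<Pi> y w \<le> 0" using f by linarith
  have zl: "w < a x y" unfolding w_def using mono[of xs y x x] assms sym[of y x] by auto
  have "\<Pi> x w - \<Pi> y w > 0" using qs2[OF zl assms(2) p] .
  thus False using h by linarith
qed

lemma L4: assumes "l' < l" "l < r" "D r l > 0" shows "D r l' > 0"
proof -
  have p: "\<Pi> r (a l r) - \<Pi> l (a l r) > 0" using assms(3) by (simp add: D_eq sym[of r l])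
  have zl: "a l' r < a l r" using mono[of l' l r r] assms by auto
  have q: "\<Pi> r (a l' r) - \<Pi> l (a l' r) > 0" using qs2[OF zl assms(2) p] .
  have "\<Pi> l (a l' r) \<ge> min (\<Pi> l' (a l' r)) (\<Pi> r (a l' r))" using qc[OF assms(1,2)] .
  hence "\<Pi> r (a l' r) - \<Pi> l' (a l' r) > 0" using q by (auto simp: min_def split: if_splits)
  thus ?thesis by (simp add: D_eq sym[of r l'])
qed

lemma L5: assumes "l < r" "r < r'" "D l r > 0" shows "D l r' > 0"
proof -
  have p: "\<Pi> l (a l r) - \<Pi> r (a l r) > 0" using assms(3) by (simp add: D_eq)
  have zl: "a l r < a l r'" using mono[of l l r r'] assms by auto
  have q: "\<not> \<Pi> r (a l r') - \<Pi> l (a l r') \<ge> 0"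
  proof
    assume "\<Pi> r (a l r') - \<Pi> l (a l r') \<ge> 0"
    from qs1[OF zl assms(1) this] p show False by linarith
  qed
  have "\<Pi> r (a l r') \<ge> min (\<Pi> l (a l r')) (\<Pi> r' (a l r'))" using qc[OF assms(1,2)] .
  hence "\<Pi> l (a l r') - \<Pi> r' (a l r') > 0" using q by (auto simp: min_def split: if_splits)
  thus ?thesis by (simp add: D_eq)
qed

definition Above where "Above l r \<longleftrightarrow> (\<exists>l'\<le>l. D l' r > 0)"

lemma Above_mono: "Above l r \<Longrightarrow> l \<le> l2 \<Longrightarrow> Above l2 r"
  unfolding Above_def by (meson order.trans)

definition S where "S x = (if x < xs then {l'. l' \<le> x} \<union> {r'. xs < r' \<and> Above x r'}
   else {r'. x \<le> r'} \<union> {l'. l' < xs \<and> \<not> Above l' x})"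

lemma S_left: "x < xs \<Longrightarrow> S x = {l'. l' \<le> x} \<union> {r'. xs < r' \<and> Above x r'}"
  unfolding S_def by simp

lemma S_right: "xs < x \<Longrightarrow> S x = {r'. x \<le> r'} \<union> {l'. l' < xs \<and> \<not> Above l' x}"
  unfolding S_def by auto

definition phi where "phi x = (if x = xs then card (UNIV :: 'x set) + 1 else card (S x))"

lemma phi_le: "phi x \<le> card (UNIV :: 'x set) + 1"
  unfolding phi_def by (auto intro: card_mono order.trans[OF card_mono[of UNIV]] simp: le_SucI)

lemma psub: "S y \<subset> S x \<Longrightarrow> phi y < phi x" if "x \<noteq> xs" "y \<noteq> xs"
  using that unfolding phi_def by (simp add: psubset_card_mono)

lemma key: assumes "D x y > 0" shows "phi y < phi x"
proof -
  have xy: "x \<noteq> y" using assms D_self by auto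
  have yxs: "y \<noteq> xs" using assms L1 by auto
  have phi_y: "phi y \<le> card (UNIV :: 'x set)" using yxs unfolding phi_def by (simp add: card_mono)
  show ?thesis
  proof (cases "x = xs")
    case True thus ?thesis using phi_y by (simp add: phi_def)
  next
    case xn: False
    show ?thesis
    proof (cases "y < xs")
      case ly: True
      have yx: "y < x" using L2[of x y] ly assms xy by (meson linorder_neqE)
      show ?thesis
      proof (cases "x < xs")
        case True
        have "S y \<subset> S x"
        proof
          show "S y \<subseteq> S x" using True ly yx Above_mono[of y _ x] by (auto simp: S_left S_right)
          have "x \<in> S x" using True by (auto simp: S_left S_right)
          moreover have "x \<notin> S y" using True ly yx by (auto simp: S_left S_right)
          ultimately show "S y \<noteq> S x" by blast
        qed
        thus ?thesis using psub xn yxs by blast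
      next
        case False
        hence gx: "xs < x" using xn by auto
        have noab: "\<not> D l'' x > 0" if "l'' \<le> y" for l''
        proof (cases "l'' = y")
          case True thus ?thesis using assms D_anti[of x y] by auto
        next
          case False
          hence "l'' < y" using that by auto
          hence "D x l'' > 0" using L4[OF _ _ assms] ly gx by auto
          thus ?thesis using D_anti[of x l''] by auto
        qed
        have "S y \<subset> S x"
        proof
          show "S y \<subseteq> S x"
          proof
            fix w assume w: "w \<in> S y"
            show "w \<in> S x"
            proof (cases "w \<le> y")
              case True
              hence "\<not> Above w x" unfolding Above_def using noab by auto
              thus ?thesis using True ly gx by (auto simp: S_left S_right)
            next
              case False
              hence ab: "xs < w" "Above y w" using w ly by (auto simp: S_left S_right)
              then obtain l'' where l'': "l'' \<le> y" "D l'' w > 0" unfolding Above_def by auto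
              have "x \<le> w"
              proof (rule ccontr)
                assume "\<not> x \<le> w"
                hence "w < x" by auto
                moreover have "l'' < w" using l'' ab ly by auto
                ultimately have "D l'' x > 0" using L5 l''(2) by blast
                thus False using noab l''(1) by auto
              qed
              thus ?thesis using gx by (auto simp: S_left S_right)
            qed
          qed
          have "x \<in> S x" using gx by (auto simp: S_left S_right)
          moreover have "x \<notin> S y" using ly yx noab by (auto simp: S_left S_right Above_def)
          ultimately show "S y \<noteq> S x" by auto
        qed
        thus ?thesis using psub xn yxs by blast
      qed
    next
      case False
      hence gy: "xs < y" using yxs by auto
      have xy2: "x < y" using L3[of y x] gy assms xy by (meson linorder_neqE)
      show ?thesis
      proof (cases "x < xs")
        case lx: True
        have ab: "Above x r'" if "y \<le> r'" for r'
        proof (cases "r' = y")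
          case True thus ?thesis using assms unfolding Above_def by auto
        next
          case False
          hence "D x r' > 0" using L5[OF _ _ assms] that lx gy by auto
          thus ?thesis unfolding Above_def by auto
        qed
        have "S y \<subset> S x"
        proof
          show "S y \<subseteq> S x"
          proof
            fix w assume w: "w \<in> S y"
            show "w \<in> S x"
            proof (cases "y \<le> w")
              case True thus ?thesis using ab gy lx by (auto simp: S_left S_right)
            next
              case False
              hence w2: "w < xs" "\<not> Above w y" using w gy by (auto simp: S_left S_right)
              have "w \<le> x"
              proof (rule ccontr)
                assume "\<not> w \<le> x"
                hence "Above w y" using assms unfolding Above_def by (auto intro!: exI[of _ x])
                thus False using w2 by auto
              qed
              thus ?thesis using lx by (auto simp: S_left S_right)
            qed
          qed
          have "x \<in> S x" using lx by (auto simp: S_left S_right)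
          moreover have "x \<notin> S y" using gy ab[of y] xy2 by (auto simp: S_left S_right)
          ultimately show "S y \<noteq> S x" by auto
        qed
        thus ?thesis using psub xn yxs by blast
      next
        case False
        hence gx: "xs < x" using xn by auto
        have "S y \<subset> S x"
        proof
          show "S y \<subseteq> S x"
          proof
            fix w assume w: "w \<in> S y"
            show "w \<in> S x"
            proof (cases "y \<le> w")
              case True thus ?thesis using gx xy2 by (auto simp: S_left S_right)
            next
              case False
              hence w2: "w < xs" "\<not> Above w y" using w gy by (auto simp: S_left S_right)
              have "\<not> Above w x"
              proof
                assume "Above w x"
                then obtain l'' where l'': "l'' \<le> w" "D l'' x > 0" unfolding Above_def by auto
                have "D l'' y > 0" using L5[OF _ xy2 l''(2)] l'' w2 gx by auto
                thus False using w2 l'' unfolding Above_def by auto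
              qed
              thus ?thesis using w2 gx by (auto simp: S_left S_right)
            qed
          qed
          have "x \<in> S x" using gx by (auto simp: S_left S_right)
          moreover have "x \<notin> S y" using gy gx xy2 by (auto simp: S_left S_right)
          ultimately show "S y \<noteq> S x" by auto
        qed
        thus ?thesis using psub xn yxs by blast
      qed
    qed
  qed
qed

end

theorem proposition6:
  fixes a :: "'x::{linorder,finite} \<Rightarrow> 'x \<Rightarrow> 'z::linorder"
    and \<Pi> :: "'x \<Rightarrow> 'z \<Rightarrow> real"
  assumes "aggregative_game a"
    and "quasiconcave \<Pi>"
    and "quasisubmodular \<Pi>"
    and "\<exists>xs. fESS a \<Pi> xs"
  shows "no_money_pump a \<Pi>"
proof -
  obtain xs where fx: "fESS a \<Pi> xs" using assms(4) by blast
  interpret G a \<Pi> xs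
  proof
    show "\<And>x y. a x y = a y x" using assms(1) by (simp add: aggregative_game_def symmetric_aggregator_def)
    show "\<And>x' x'' y' y''. x'' \<ge> x' \<Longrightarrow> y'' \<ge> y' \<Longrightarrow> (x'',y'') \<noteq> (x',y') \<Longrightarrow> a x'' y'' > a x' y'"
      using assms(1) by (simp add: aggregative_game_def monotone_aggregator_def)
    show "\<And>x x' x'' z. x < x' \<Longrightarrow> x' < x'' \<Longrightarrow> \<Pi> x' z \<ge> min (\<Pi> x z) (\<Pi> x'' z)"
      using assms(2) by (simp add: quasiconcave_def)
    show "\<And>z' z'' x' x''. z' < z'' \<Longrightarrow> x' < x'' \<Longrightarrow> \<Pi> x'' z'' - \<Pi> x' z'' \<ge> 0 \<Longrightarrow> \<Pi> x'' z' - \<Pi> x' z' \<ge> 0"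
      using assms(3) unfolding quasisubmodular_def by blast
    show "\<And>z' z'' x' x''. z' < z'' \<Longrightarrow> x' < x'' \<Longrightarrow> \<Pi> x'' z'' - \<Pi> x' z'' > 0 \<Longrightarrow> \<Pi> x'' z' - \<Pi> x' z' > 0"
      using assms(3) unfolding quasisubmodular_def by blast
    show "\<And>x. \<Pi> xs (a xs x) \<ge> \<Pi> x (a xs x)" using fx by (simp add: fESS_def)
  qed
  define Dm where "Dm = Max (range (\<lambda>p. D (fst p) (snd p)))"
  have Dle: "D x y \<le> Dm" for x y
  proof -
    have "D x y \<in> range (\<lambda>p. D (fst p) (snd p))" by (rule image_eqI[of _ _ "(x,y)"]) auto
    thus ?thesis unfolding Dm_def by (intro Max_ge) auto
  qed
  have Dm0: "0 \<le> Dm" using Dle[of xs xs] D_self by simp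
  define M where "M = Dm * (real (card (UNIV :: 'x set)) + 1)"
  have M0: "M \<ge> 0" using Dm0 by (simp add: M_def)
  have bound: "(\<Sum>t\<le>T. D (f t) (imitate a \<Pi> y0 f t))
      \<le> Dm * (real (phi (imitate a \<Pi> y0 f (Suc T))) - real (phi y0))" for y0 f T
  proof (induction T)
    case 0
    show ?case
    proof (cases "D (f 0) y0 > 0")
      case True
      hence "phi y0 < phi (f 0)" using key by blast
      hence "1 \<le> real (phi (f 0)) - real (phi y0)" by linarith
      hence "Dm * 1 \<le> Dm * (real (phi (f 0)) - real (phi y0))" using Dm0 by (rule mult_left_mono)
      moreover have e: "(\<Sum>t\<le>0. D (f t) (imitate a \<Pi> y0 f t)) = D (f 0) y0" by simp
      moreover have i: "imitate a \<Pi> y0 f (Suc 0) = f 0" using True by simp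
      ultimately show ?thesis using True Dle[of "f 0" y0] by (simp only: e i)
    next
      case False thus ?thesis by simp
    qed
  next
    case (Suc T)
    let ?y = "imitate a \<Pi> y0 f (Suc T)"
    have step: "D (f (Suc T)) ?y \<le> Dm * (real (phi (imitate a \<Pi> y0 f (Suc (Suc T)))) - real (phi ?y))"
    proof (cases "D (f (Suc T)) ?y > 0")
      case True
      hence "phi ?y < phi (f (Suc T))" using key by blast
      hence "1 \<le> real (phi (f (Suc T))) - real (phi ?y)" by linarith
      hence "Dm * 1 \<le> Dm * (real (phi (f (Suc T))) - real (phi ?y))" using Dm0 by (rule mult_left_mono)
      moreover have "imitate a \<Pi> y0 f (Suc (Suc T)) = f (Suc T)" using True by simp
      ultimately show ?thesis using Dle[of "f (Suc T)" ?y] by (simp del: imitate.simps)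
    next
      case False
      hence "imitate a \<Pi> y0 f (Suc (Suc T)) = ?y" by (simp only: imitate.simps(2) False if_False)
      thus ?thesis using False by simp
    qed
    have "(\<Sum>t\<le>Suc T. D (f t) (imitate a \<Pi> y0 f t)) = (\<Sum>t\<le>T. D (f t) (imitate a \<Pi> y0 f t)) + D (f (Suc T)) ?y"
      by simp
    also have "\<dots> \<le> Dm * (real (phi ?y) - real (phi y0)) + Dm * (real (phi (imitate a \<Pi> y0 f (Suc (Suc T)))) - real (phi ?y))"
      using Suc.IH step by linarith
    also have "\<dots> = Dm * (real (phi (imitate a \<Pi> y0 f (Suc (Suc T)))) - real (phi y0))"
      by (simp add: algebra_simps)
    finally show ?case .
  qed
  have bM: "(\<Sum>t\<le>T. D (f t) (imitate a \<Pi> y0 f t)) \<le> M" for y0 f T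
  proof -
    have "real (phi (imitate a \<Pi> y0 f (Suc T))) - real (phi y0) \<le> real (card (UNIV :: 'x set)) + 1"
      using phi_le[of "imitate a \<Pi> y0 f (Suc T)"] by linarith
    hence "Dm * (real (phi (imitate a \<Pi> y0 f (Suc T))) - real (phi y0)) \<le> M"
      unfolding M_def using Dm0 by (simp add: mult_left_mono) 
    thus ?thesis using bound[where ?y0.0=y0 and f=f and T=T] by linarith
  qed
  show ?thesis unfolding no_money_pump_def
  proof (intro exI[of _ M] conjI allI M0)
    fix y0 f
    show "limsup (\<lambda>T. ereal (\<Sum>t\<le>T. D (f t) (imitate a \<Pi> y0 f t))) \<le> ereal M"
      by (rule Limsup_bounded) (simp add: bM)
  qed
qed

end
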